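(* For $i=1,\dots,d$ let $K_i(z,z')=f_i(z)f_i(z')g_i(zz')$ be an interpretable Taylor kernel on a connected domain $\mathcal{X}_i\subseteq\mathbb{R}$, and let $K(x,y)=\prod_{i=1}^d K_i(x_i,y_i)$ on $\mathcal{X}=\mathcal{X}_1\times\dots\times\mathcal{X}_d$. Fix an integer $M\ge 0$ and let $\phi_{i,j}(z)=z^j f_i(z)\sqrt{g_i^{(j)}(0)/j!}$ for $i\in[d]$, $0\le j\le M$ (the surrogate features of order $M$). Then threshold cuts on surrogate features yield interpretable splits: for every finite set $S\subset\mathcal{X}$, every $i\in[d]$, $0\le j\le M$ and $\theta\in\mathbb{R}$, the partition of $S$ into $\{x\in S:\phi_{i,j}(x_i)\le\theta\}$ and $\{x\in S:\phi_{i,j}(x_i)>\theta\}$ is of the form $\{x\in S: x_i\in[\theta_1,\theta_2]\}$ and $\{x\in S:x_i\notin[\theta_1,\theta_2]\}$ for some real $\theta_1<\theta_2$ (in some order of the two parts). Consequently, any decision tree on a finite dataset in $\mathcal{X}$ whose internal nodes split the data by threshold cuts $\phi_{i,j}(x_i)\le\theta$ versus $\phi_{i,j}(x_i)>\theta$ is an interpretable decision tree.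
   Context: An interpretable Taylor kernel is a bounded kernel $K_i$ on a connected domain $\mathcal{X}_i\subseteq\mathbb{R}$ of the form $K_i(z,z')=f(z)f(z')g(zz')$ with $f$ differentiable and $g$ analytic, such that $g^{(j)}(0)\ge 0$ for all $j\in\mathbb{N}$ ($g^{(j)}$ the $j$-th derivative) and such that for every $j\in\mathbb{N}$ the equation $z^{j-1}(zf'(z)+jf(z))=0$ has at most one solution $z\in\mathcal{X}_i$. An interpretable decision tree on a dataset $X\subset\mathbb{R}^d$ is a binary tree partitioning $X$ in which at every internal node $u$, receiving data $X^u$, there exist $i\in[d]$ and real $\theta_1<\theta_2$ such that $X^u$ is split into $\{x\in X^u:x_i\in[\theta_1,\theta_2]\}$ and $\{x\in X^u:x_i\notin[\theta_1,\theta_2]\}$. *)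

theory Defs
  imports "HOL-Analysis.Analysis"
begin

definition real_analytic_on :: "(real \<Rightarrow> real) \<Rightarrow> real set \<Rightarrow> bool" where
  "real_analytic_on g A \<longleftrightarrow>
     (\<forall>x\<in>A. \<exists>r>0. \<exists>c::nat \<Rightarrow> real. \<forall>y. \<bar>y - x\<bar> < r \<longrightarrow> (\<lambda>n. c n * (y - x) ^ n) sums g y)"

definition bounded_kernel :: "'a set \<Rightarrow> ('a \<Rightarrow> 'a \<Rightarrow> real) \<Rightarrow> bool" where
  "bounded_kernel A k \<longleftrightarrow>
     (\<forall>x\<in>A. \<forall>y\<in>A. k x y = k y x) \<and>
     (\<forall>xs cs. set xs \<subseteq> A \<longrightarrow> length cs = length xs \<longrightarrow>
        (\<Sum>a<length xs. \<Sum>b<length xs. cs ! a * cs ! b * k (xs ! a) (xs ! b)) \<ge> 0) \<and>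
     (\<exists>B. \<forall>x\<in>A. \<forall>y\<in>A. \<bar>k x y\<bar> \<le> B)"

text \<open>The expression z^(j-1) (z f'(z) + j f(z)), i.e. the derivative of z^j f(z);
  for j = 0 this is read as f'(z).\<close>
definition taylor_crit :: "(real \<Rightarrow> real) \<Rightarrow> nat \<Rightarrow> real \<Rightarrow> real" where
  "taylor_crit f j z =
     (if j = 0 then deriv f z else z ^ (j - 1) * (z * deriv f z + real j * f z))"

definition interpretable_taylor_kernel ::
  "real set \<Rightarrow> (real \<Rightarrow> real) \<Rightarrow> (real \<Rightarrow> real) \<Rightarrow> bool" where
  "interpretable_taylor_kernel X f g \<longleftrightarrow>
     connected X \<and>
     bounded_kernel X (\<lambda>z z'. f z * f z' * g (z * z')) \<and>
     (\<forall>z\<in>X. f differentiable (at z)) \<and>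
     (\<exists>U. open U \<and> 0 \<in> U \<and> {z * z' | z z'. z \<in> X \<and> z' \<in> X} \<subseteq> U \<and> real_analytic_on g U) \<and>
     (\<forall>j. (deriv ^^ j) g 0 \<ge> 0) \<and>
     (\<forall>j. \<forall>z1\<in>X. \<forall>z2\<in>X. taylor_crit f j z1 = 0 \<longrightarrow> taylor_crit f j z2 = 0 \<longrightarrow> z1 = z2)"

definition surrogate_feature ::
  "('d \<Rightarrow> real \<Rightarrow> real) \<Rightarrow> ('d \<Rightarrow> real \<Rightarrow> real) \<Rightarrow> 'd \<Rightarrow> nat \<Rightarrow> real \<Rightarrow> real" where
  "surrogate_feature f g i j z = z ^ j * f i z * sqrt ((deriv ^^ j) (g i) 0 / fact j)"

datatype 'a dtree = Leaf | Node "'a \<Rightarrow> bool" "'a dtree" "'a dtree"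

definition interpretable_split :: "(real ^ 'd) set \<Rightarrow> ((real ^ 'd) \<Rightarrow> bool) \<Rightarrow> bool" where
  "interpretable_split S P \<longleftrightarrow>
     (\<exists>i t1 t2. t1 < t2 \<and>
       (({x\<in>S. P x} = {x\<in>S. x $ i \<in> {t1..t2}} \<and> {x\<in>S. \<not> P x} = {x\<in>S. x $ i \<notin> {t1..t2}}) \<or>
        ({x\<in>S. \<not> P x} = {x\<in>S. x $ i \<in> {t1..t2}} \<and> {x\<in>S. P x} = {x\<in>S. x $ i \<notin> {t1..t2}})))"

fun interpretable_dtree :: "(real ^ 'd) set \<Rightarrow> (real ^ 'd) dtree \<Rightarrow> bool" where
  "interpretable_dtree S Leaf = True"
| "interpretable_dtree S (Node P l r) =
     (interpretable_split S P \<and> interpretable_dtree {x\<in>S. P x} l \<and> interpretable_dtree {x\<in>S. \<not> P x} r)"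

fun threshold_dtree ::
  "('d \<Rightarrow> nat \<Rightarrow> real \<Rightarrow> real) \<Rightarrow> nat \<Rightarrow> (real ^ 'd) dtree \<Rightarrow> bool" where
  "threshold_dtree \<phi> M Leaf = True"
| "threshold_dtree \<phi> M (Node P l r) =
     ((\<exists>i j \<theta>. j \<le> M \<and> P = (\<lambda>x. \<phi> i j (x $ i) \<le> \<theta>)) \<and>
      threshold_dtree \<phi> M l \<and> threshold_dtree \<phi> M r)"

end

theory Submission
  imports Defs
begin

lemma interior_max:
  fixes h h' :: "real \<Rightarrow> real" and X :: "real set"
  assumes conn: "connected X"
    and der: "\<And>z. z \<in> X \<Longrightarrow> (h has_real_derivative h' z) (at z)"
    and a: "a \<in> X" and c: "c \<in> X" and ab: "a \<le> b" and bc: "b \<le> c"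
    and ha: "h a \<le> \<theta>" and hc: "h c \<le> \<theta>" and hb: "h b > \<theta>"
  shows "\<exists>p\<in>X. h' p = 0 \<and> h p > \<theta>"
proof -
  have sub: "{a..c} \<subseteq> X" using connected_contains_Icc[OF conn a c] .
  have "continuous_on {a..c} h"
    using sub der by (meson DERIV_isCont continuous_at_imp_continuous_on subsetD)
  then obtain p where p: "p \<in> {a..c}" and pm: "\<forall>y\<in>{a..c}. h y \<le> h p"
    using continuous_attains_sup[of "{a..c}" h] ab bc by auto
  have "h p \<ge> h b" using pm ab bc by auto
  hence hp: "h p > \<theta>" using hb by linarith
  have "p \<noteq> a" "p \<noteq> c" using hp ha hc by auto
  hence ap: "a < p" "p < c" using p by auto
  have "h' p = 0"
  proof (rule DERIV_local_max[OF der[of p], of "min (p - a) (c - p)"])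
    show "p \<in> X" using sub p by auto
    show "0 < min (p - a) (c - p)" using ap by auto
    show "\<forall>y. \<bar>p - y\<bar> < min (p - a) (c - p) \<longrightarrow> h y \<le> h p"
      using pm by (auto simp: abs_if split: if_splits)
  qed
  thus ?thesis using hp sub p by auto
qed

lemma interior_min:
  fixes h h' :: "real \<Rightarrow> real" and X :: "real set"
  assumes conn: "connected X"
    and der: "\<And>z. z \<in> X \<Longrightarrow> (h has_real_derivative h' z) (at z)"
    and a: "a \<in> X" and c: "c \<in> X" and ab: "a \<le> b" and bc: "b \<le> c"
    and ha: "h a > \<theta>" and hc: "h c > \<theta>" and hb: "h b \<le> \<theta>"
  shows "\<exists>p\<in>X. h' p = 0 \<and> h p \<le> \<theta>"
proof -
  have sub: "{a..c} \<subseteq> X" using connected_contains_Icc[OF conn a c] .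
  have "continuous_on {a..c} h"
    using sub der by (meson DERIV_isCont continuous_at_imp_continuous_on subsetD)
  then obtain p where p: "p \<in> {a..c}" and pm: "\<forall>y\<in>{a..c}. h p \<le> h y"
    using continuous_attains_inf[of "{a..c}" h] ab bc by auto
  have "h p \<le> h b" using pm ab bc by auto
  hence hp: "h p \<le> \<theta>" using hb by linarith
  have "p \<noteq> a" "p \<noteq> c" using hp ha hc by auto
  hence ap: "a < p" "p < c" using p by auto
  have "h' p = 0"
  proof (rule DERIV_local_min[OF der[of p], of "min (p - a) (c - p)"])
    show "p \<in> X" using sub p by auto
    show "0 < min (p - a) (c - p)" using ap by auto
    show "\<forall>y. \<bar>p - y\<bar> < min (p - a) (c - p) \<longrightarrow> h p \<le> h y"
      using pm by (auto simp: abs_if split: if_splits)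
  qed
  thus ?thesis using hp sub p by auto
qed

definition oconv :: "real set \<Rightarrow> bool" where
  "oconv C \<longleftrightarrow> (\<forall>a b c. a \<in> C \<longrightarrow> c \<in> C \<longrightarrow> a \<le> b \<longrightarrow> b \<le> c \<longrightarrow> b \<in> C)"

lemma key:
  fixes h h' :: "real \<Rightarrow> real" and X :: "real set"
  assumes conn: "connected X"
    and der: "\<And>z. z \<in> X \<Longrightarrow> (h has_real_derivative h' z) (at z)"
    and uniq: "\<forall>z1\<in>X. \<forall>z2\<in>X. h' z1 = 0 \<longrightarrow> h' z2 = 0 \<longrightarrow> z1 = z2"
  shows "oconv {z\<in>X. h z \<le> \<theta>} \<or> oconv {z\<in>X. h z > \<theta>}"
proof (rule ccontr)
  assume "\<not> ?thesis"
  then obtain a b c a' b' c' where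
    1: "a \<in> X" "c \<in> X" "a \<le> b" "b \<le> c" "h a \<le> \<theta>" "h c \<le> \<theta>" "\<not> (b \<in> X \<and> h b \<le> \<theta>)"
    and 2: "a' \<in> X" "c' \<in> X" "a' \<le> b'" "b' \<le> c'" "h a' > \<theta>" "h c' > \<theta>" "\<not> (b' \<in> X \<and> h b' > \<theta>)"
    unfolding oconv_def by auto
  have "b \<in> X" using connected_contains_Icc[OF conn 1(1) 1(2)] 1(3,4) by auto
  moreover have "b' \<in> X" using connected_contains_Icc[OF conn 2(1) 2(2)] 2(3,4) by auto
  ultimately obtain p q where "p \<in> X" "h' p = 0" "h p > \<theta>" "q \<in> X" "h' q = 0" "h q \<le> \<theta>"
    using interior_max[OF conn der, of a c b \<theta>] interior_min[OF conn der, of a' c' b' \<theta>] 1 2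
    by force
  thus False using uniq by force
qed

lemma finite_interval:
  fixes S :: "(real ^ 'd) set"
  assumes fin: "finite S" and C: "oconv C"
  shows "\<exists>t1 t2. t1 < t2 \<and> {x\<in>S. x $ i \<in> C} = {x\<in>S. x $ i \<in> {t1..t2}}"
proof -
  define W where "W = (\<lambda>x. x $ i) ` S"
  define V where "V = W \<inter> C"
  have fW: "finite W" using fin W_def by auto
  have fV: "finite V" using fW V_def by auto
  show ?thesis
  proof (cases "V = {}")
    case True
    define t1 where "t1 = Max (insert 0 W) + 1"
    have "\<forall>w\<in>W. w < t1"
    proof
      fix w assume "w \<in> W"
      hence "w \<le> Max (insert 0 W)" using fW by simp
      thus "w < t1" using t1_def by simp
    qed
    hence "\<forall>x\<in>S. x $ i < t1" using W_def by auto
    moreover have "\<forall>x\<in>S. x $ i \<notin> C" using True V_def W_def by auto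
    ultimately have "{x\<in>S. x $ i \<in> C} = {x\<in>S. x $ i \<in> {t1..t1+1}}"
      by (auto simp del: atLeastAtMost_iff) (auto simp: not_le) 
    moreover have "t1 < t1 + 1" by simp
    ultimately show ?thesis by (intro exI[of _ t1] exI[of _ "t1+1"] conjI)
  next
    case False
    define m where "m = Max V"
    define U where "U = {w\<in>W. w > m}"
    define t2 where "t2 = (m + Min (insert (m+2) U)) / 2"
    have fU: "finite U" using fW U_def by auto
    have mm: "Min (insert (m+2) U) > m"
    proof -
      have "\<forall>u\<in>insert (m+2) U. u > m" using U_def by auto
      thus ?thesis using fU Min_in[of "insert (m+2) U"] by blast
    qed
    have t2m: "t2 > m" using mm t2_def by auto
    have t2U: "\<forall>w\<in>W. w \<le> t2 \<longrightarrow> w \<le> m"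
    proof (intro ballI impI)
      fix w assume w: "w \<in> W" "w \<le> t2"
      show "w \<le> m"
      proof (rule ccontr)
        assume "\<not> w \<le> m"
        hence "w \<in> U" using w U_def by auto
        hence "Min (insert (m+2) U) \<le> w" using fU by auto
        thus False using w mm t2_def by auto
      qed
    qed
    have "Min V \<in> V" "Max V \<in> V" using fV False by auto
    hence MinV: "Min V \<in> C" "m \<in> C" using V_def m_def by auto
    have "Min V \<le> m" using fV False m_def by auto
    hence lt: "Min V < t2" using t2m by auto
    have "{x\<in>S. x $ i \<in> C} = {x\<in>S. x $ i \<in> {Min V..t2}}"
    proof (intro set_eqI iffI)
      fix x assume x: "x \<in> {x\<in>S. x $ i \<in> C}"
      hence "x $ i \<in> V" using V_def W_def by auto
      hence "Min V \<le> x $ i" "x $ i \<le> m" using fV m_def by auto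
      thus "x \<in> {x\<in>S. x $ i \<in> {Min V..t2}}" using x t2m by auto
    next
      fix x assume x: "x \<in> {x\<in>S. x $ i \<in> {Min V..t2}}"
      hence "x $ i \<in> W" using W_def by auto
      have xm: "x $ i \<le> m" using t2U x \<open>x $ i \<in> W\<close> by auto
      have "Min V \<le> x $ i" using x by simp
      hence "x $ i \<in> C" using C[unfolded oconv_def, rule_format, OF MinV(1) MinV(2)] xm by blast
      thus "x \<in> {x\<in>S. x $ i \<in> C}" using x by auto
    qed
    thus ?thesis using lt by (intro exI[of _ "Min V"] exI[of _ t2] conjI)
  qed
qed

lemma crit_deriv:
  assumes "f differentiable (at z)"
  shows "((\<lambda>z. z ^ j * f z * c) has_real_derivative c * taylor_crit f j z) (at z)"
proof -
  have df: "(f has_real_derivative deriv f z) (at z)"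
    using assms DERIV_deriv_iff_real_differentiable by blast
  have "((\<lambda>z. z ^ j * f z * c) has_real_derivative
          (real j * z ^ (j - Suc 0) * f z + deriv f z * z ^ j) * c) (at z)"
    by (rule DERIV_cmult_right[OF DERIV_mult[OF DERIV_pow df]])
  moreover have "(real j * z ^ (j - Suc 0) * f z + deriv f z * z ^ j) * c = c * taylor_crit f j z"
  proof (cases j)
    case 0 thus ?thesis by (simp add: taylor_crit_def)
  next
    case (Suc k) thus ?thesis by (simp add: taylor_crit_def algebra_simps)
  qed
  ultimately show ?thesis by simp
qed

lemma split_eq2:
  fixes h :: "'a \<Rightarrow> real"
  assumes H: "\<forall>x\<in>S. (h x \<le> \<theta> \<longleftrightarrow> Q x)"
  shows "{x\<in>S. h x \<le> \<theta>} = {x\<in>S. Q x} \<and> {x\<in>S. h x > \<theta>} = {x\<in>S. \<not> Q x}"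
proof
  show "{x\<in>S. h x \<le> \<theta>} = {x\<in>S. Q x}" using H by auto
  show "{x\<in>S. h x > \<theta>} = {x\<in>S. \<not> Q x}"
  proof -
    have "{x\<in>S. h x > \<theta>} = {x\<in>S. \<not> h x \<le> \<theta>}" by (simp add: not_le)
    also have "\<dots> = {x\<in>S. \<not> Q x}" using H by auto
    finally show ?thesis .
  qed
qed
lemma split_eq3:
  fixes h :: "'a \<Rightarrow> real"
  assumes H: "\<forall>x\<in>S. (h x > \<theta> \<longleftrightarrow> Q x)"
  shows "{x\<in>S. h x > \<theta>} = {x\<in>S. Q x} \<and> {x\<in>S. h x \<le> \<theta>} = {x\<in>S. \<not> Q x}"
proof
  show "{x\<in>S. h x > \<theta>} = {x\<in>S. Q x}" using H by auto
  show "{x\<in>S. h x \<le> \<theta>} = {x\<in>S. \<not> Q x}"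
  proof -
    have "{x\<in>S. h x \<le> \<theta>} = {x\<in>S. \<not> h x > \<theta>}" by (simp add: not_less)
    also have "\<dots> = {x\<in>S. \<not> Q x}" using H by auto
    finally show ?thesis .
  qed
qed

lemma part1:
  fixes X :: "'d::finite \<Rightarrow> real set"
    and f g :: "'d \<Rightarrow> real \<Rightarrow> real"
  assumes itk: "\<And>i. interpretable_taylor_kernel (X i) (f i) (g i)"
    and fin: "finite S" and SX: "S \<subseteq> {x :: real ^ 'd. \<forall>k. x $ k \<in> X k}"
  shows "\<exists>t1 t2. t1 < t2 \<and>
              (({x\<in>S. surrogate_feature f g i j (x $ i) \<le> \<theta>} = {x\<in>S. x $ i \<in> {t1..t2}} \<and>
                {x\<in>S. surrogate_feature f g i j (x $ i) > \<theta>} = {x\<in>S. x $ i \<notin> {t1..t2}}) \<or>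
               ({x\<in>S. surrogate_feature f g i j (x $ i) > \<theta>} = {x\<in>S. x $ i \<in> {t1..t2}} \<and>
                {x\<in>S. surrogate_feature f g i j (x $ i) \<le> \<theta>} = {x\<in>S. x $ i \<notin> {t1..t2}}))"
proof -
  define c where "c = sqrt ((deriv ^^ j) (g i) 0 / fact j)"
  define h where "h = (\<lambda>z. z ^ j * f i z * c)"
  have hsf: "\<And>z. surrogate_feature f g i j z = h z"
    by (simp add: surrogate_feature_def h_def c_def)
  have it: "interpretable_taylor_kernel (X i) (f i) (g i)" by (rule itk)
  have conn: "connected (X i)"
    using it[unfolded interpretable_taylor_kernel_def] by (elim conjE) assumption
  have dif: "\<forall>z\<in>X i. f i differentiable (at z)"
    using it[unfolded interpretable_taylor_kernel_def] by (elim conjE) assumption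
  have gpos: "\<forall>j. (deriv ^^ j) (g i) 0 \<ge> 0"
    using it[unfolded interpretable_taylor_kernel_def] by (elim conjE) assumption
  have unj: "\<forall>j. \<forall>z1\<in>X i. \<forall>z2\<in>X i. taylor_crit (f i) j z1 = 0 \<longrightarrow> taylor_crit (f i) j z2 = 0 \<longrightarrow> z1 = z2"
    using it[unfolded interpretable_taylor_kernel_def] by (elim conjE) assumption
  have un: "\<forall>z1\<in>X i. \<forall>z2\<in>X i. taylor_crit (f i) j z1 = 0 \<longrightarrow> taylor_crit (f i) j z2 = 0 \<longrightarrow> z1 = z2"
    using spec[where x=j, OF unj] .
  have memX: "\<And>x. x \<in> S \<Longrightarrow> x $ i \<in> X i" using SX by blast
  have q1: "\<forall>x\<in>S. (h (x $ i) \<le> \<theta> \<longleftrightarrow> x $ i \<in> {z\<in>X i. h z \<le> \<theta>})"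
  proof
    fix x assume "x \<in> S"
    hence "x $ i \<in> X i" by (rule memX)
    thus "h (x $ i) \<le> \<theta> \<longleftrightarrow> x $ i \<in> {z\<in>X i. h z \<le> \<theta>}" by simp
  qed
  have q2: "\<forall>x\<in>S. (h (x $ i) > \<theta> \<longleftrightarrow> x $ i \<in> {z\<in>X i. h z > \<theta>})"
  proof
    fix x assume "x \<in> S"
    hence "x $ i \<in> X i" by (rule memX)
    thus "h (x $ i) > \<theta> \<longleftrightarrow> x $ i \<in> {z\<in>X i. h z > \<theta>}" by simp
  qed
  have ocX: "oconv (X i)" unfolding oconv_def
  proof (intro allI impI)
    fix a b c' assume "a \<in> X i" "c' \<in> X i" "a \<le> b" "b \<le> c'"
    thus "b \<in> X i" using connected_contains_Icc[OF conn, of a c'] by auto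
  qed
  obtain C where Cc: "oconv C" and
      Ch: "(\<forall>x\<in>S. (h (x $ i) \<le> \<theta> \<longleftrightarrow> x $ i \<in> C)) \<or> (\<forall>x\<in>S. (h (x $ i) > \<theta> \<longleftrightarrow> x $ i \<in> C))"
  proof (cases "c = 0")
    case True
    have h0: "\<And>z. h z = 0" using True unfolding h_def by simp
    have "oconv {z\<in>X i. h z \<le> \<theta>}"
    proof (cases "0 \<le> \<theta>")
      case True
      hence "{z\<in>X i. h z \<le> \<theta>} = X i" by (simp add: h0)
      thus ?thesis using ocX by simp
    next
      case False
      hence e: "{z\<in>X i. h z \<le> \<theta>} = {}" by (simp add: h0)
      have oce: "oconv {}" unfolding oconv_def by simp
      show ?thesis by (subst e) (rule oce)
    qed
    thus ?thesis using that[OF _ disjI1[OF q1]] by blast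
  next
    case False
    have "(deriv ^^ j) (g i) 0 \<ge> 0" using spec[where x=j, OF gpos] .
    hence "c \<ge> 0" unfolding c_def by simp
    hence cpos: "c > 0" using False by simp
    have der: "\<And>z. z \<in> X i \<Longrightarrow> (h has_real_derivative c * taylor_crit (f i) j z) (at z)"
    proof -
      fix z assume "z \<in> X i"
      hence "f i differentiable (at z)" using dif by blast
      thus "(h has_real_derivative c * taylor_crit (f i) j z) (at z)"
        unfolding h_def by (rule crit_deriv)
    qed
    have u2: "\<forall>z1\<in>X i. \<forall>z2\<in>X i. c * taylor_crit (f i) j z1 = 0 \<longrightarrow> c * taylor_crit (f i) j z2 = 0 \<longrightarrow> z1 = z2"
      using un cpos by simp
    from key[OF conn der u2, of \<theta>] show ?thesis
    proof
      assume "oconv {z\<in>X i. h z \<le> \<theta>}"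
      thus ?thesis using that[OF _ disjI1[OF q1]] by blast
    next
      assume "oconv {z\<in>X i. h z > \<theta>}"
      thus ?thesis using that[OF _ disjI2[OF q2]] by blast
    qed
  qed
  obtain t1 t2 where t: "t1 < t2" "{x\<in>S. x $ i \<in> C} = {x\<in>S. x $ i \<in> {t1..t2}}"
    using finite_interval[OF fin Cc] by blast
  have eq: "x $ i \<in> C \<longleftrightarrow> x $ i \<in> {t1..t2}" if xS: "x \<in> S" for x
  proof -
    have "x \<in> {x\<in>S. x $ i \<in> C} \<longleftrightarrow> x \<in> {x\<in>S. x $ i \<in> {t1..t2}}" using t(2) by simp
    thus ?thesis using xS by simp
  qed
  have main: "({x\<in>S. h (x $ i) \<le> \<theta>} = {x\<in>S. x $ i \<in> {t1..t2}} \<and>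
                {x\<in>S. h (x $ i) > \<theta>} = {x\<in>S. x $ i \<notin> {t1..t2}}) \<or>
               ({x\<in>S. h (x $ i) > \<theta>} = {x\<in>S. x $ i \<in> {t1..t2}} \<and>
                {x\<in>S. h (x $ i) \<le> \<theta>} = {x\<in>S. x $ i \<notin> {t1..t2}})"
    proof (rule disjE[OF Ch])
      assume A: "\<forall>x\<in>S. (h (x $ i) \<le> \<theta> \<longleftrightarrow> x $ i \<in> C)"
      have "\<forall>x\<in>S. (h (x $ i) \<le> \<theta> \<longleftrightarrow> x $ i \<in> {t1..t2})"
        using A eq by simp
      hence "{x\<in>S. h (x $ i) \<le> \<theta>} = {x\<in>S. x $ i \<in> {t1..t2}} \<and>
                {x\<in>S. h (x $ i) > \<theta>} = {x\<in>S. x $ i \<notin> {t1..t2}}"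
        by (rule split_eq2)
      thus ?thesis ..
    next
      assume A: "\<forall>x\<in>S. (h (x $ i) > \<theta> \<longleftrightarrow> x $ i \<in> C)"
      have "\<forall>x\<in>S. (h (x $ i) > \<theta> \<longleftrightarrow> x $ i \<in> {t1..t2})"
        using A eq by simp
      hence "{x\<in>S. h (x $ i) > \<theta>} = {x\<in>S. x $ i \<in> {t1..t2}} \<and>
                {x\<in>S. h (x $ i) \<le> \<theta>} = {x\<in>S. x $ i \<notin> {t1..t2}}"
        by (rule split_eq3)
      thus ?thesis ..
    qed
  show ?thesis unfolding hsf by (rule exI[of _ t1], rule exI[of _ t2], rule conjI[OF t(1) main])
qed

theorem theorem3:
  fixes X :: "'d::finite \<Rightarrow> real set"
    and f g :: "'d \<Rightarrow> real \<Rightarrow> real"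
    and M :: nat
  assumes itk: "\<And>i. interpretable_taylor_kernel (X i) (f i) (g i)"
  shows "(\<forall>S i j \<theta>. finite S \<longrightarrow> S \<subseteq> {x :: real ^ 'd. \<forall>k. x $ k \<in> X k} \<longrightarrow> j \<le> M \<longrightarrow>
            (\<exists>t1 t2. t1 < t2 \<and>
              (({x\<in>S. surrogate_feature f g i j (x $ i) \<le> \<theta>} = {x\<in>S. x $ i \<in> {t1..t2}} \<and>
                {x\<in>S. surrogate_feature f g i j (x $ i) > \<theta>} = {x\<in>S. x $ i \<notin> {t1..t2}}) \<or>
               ({x\<in>S. surrogate_feature f g i j (x $ i) > \<theta>} = {x\<in>S. x $ i \<in> {t1..t2}} \<and>
                {x\<in>S. surrogate_feature f g i j (x $ i) \<le> \<theta>} = {x\<in>S. x $ i \<notin> {t1..t2}}))))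
       \<and> (\<forall>S T. finite S \<longrightarrow> S \<subseteq> {x :: real ^ 'd. \<forall>k. x $ k \<in> X k} \<longrightarrow>
            threshold_dtree (surrogate_feature f g) M T \<longrightarrow> interpretable_dtree S T)"
proof (intro conjI allI impI)
  fix S i j \<theta>
  assume a1: "finite S" and a2: "S \<subseteq> {x :: real ^ 'd. \<forall>k. x $ k \<in> X k}" and "j \<le> M"
  show "\<exists>t1 t2. t1 < t2 \<and>
              (({x\<in>S. surrogate_feature f g i j (x $ i) \<le> \<theta>} = {x\<in>S. x $ i \<in> {t1..t2}} \<and>
                {x\<in>S. surrogate_feature f g i j (x $ i) > \<theta>} = {x\<in>S. x $ i \<notin> {t1..t2}}) \<or>
               ({x\<in>S. surrogate_feature f g i j (x $ i) > \<theta>} = {x\<in>S. x $ i \<in> {t1..t2}} \<and>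
                {x\<in>S. surrogate_feature f g i j (x $ i) \<le> \<theta>} = {x\<in>S. x $ i \<notin> {t1..t2}}))"
    by (rule part1[OF itk a1 a2])
next
  fix S :: "(real ^ 'd) set" and T
  assume "finite S" "S \<subseteq> {x :: real ^ 'd. \<forall>k. x $ k \<in> X k}"
    "threshold_dtree (surrogate_feature f g) M T"
  thus "interpretable_dtree S T"
  proof (induction T arbitrary: S)
    case Leaf thus ?case by simp
  next
    case (Node P l r)
    have thr: "threshold_dtree (surrogate_feature f g) M l" "threshold_dtree (surrogate_feature f g) M r"
      "\<exists>i j \<theta>. j \<le> M \<and> P = (\<lambda>x. surrogate_feature f g i j (x $ i) \<le> \<theta>)"
      using Node.prems(3) by simp_all
    then obtain i j \<theta> where P: "P = (\<lambda>x. surrogate_feature f g i j (x $ i) \<le> \<theta>)" by blast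
    obtain t1 t2 where t: "t1 < t2"
      "({x\<in>S. surrogate_feature f g i j (x $ i) \<le> \<theta>} = {x\<in>S. x $ i \<in> {t1..t2}} \<and>
                {x\<in>S. surrogate_feature f g i j (x $ i) > \<theta>} = {x\<in>S. x $ i \<notin> {t1..t2}}) \<or>
               ({x\<in>S. surrogate_feature f g i j (x $ i) > \<theta>} = {x\<in>S. x $ i \<in> {t1..t2}} \<and>
                {x\<in>S. surrogate_feature f g i j (x $ i) \<le> \<theta>} = {x\<in>S. x $ i \<notin> {t1..t2}})"
      using part1[OF itk Node.prems(1) Node.prems(2), of i j \<theta>] by blast
    have e1: "{x\<in>S. P x} = {x\<in>S. surrogate_feature f g i j (x $ i) \<le> \<theta>}" by (simp add: P)
    have e2: "{x\<in>S. \<not> P x} = {x\<in>S. surrogate_feature f g i j (x $ i) > \<theta>}" by (auto simp add: P)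
    have sp: "interpretable_split S P"
      unfolding interpretable_split_def e1 e2
      by (rule exI[of _ i], rule exI[of _ t1], rule exI[of _ t2], rule conjI[OF t(1) t(2)])
    have s1: "{x\<in>S. P x} \<subseteq> {x :: real ^ 'd. \<forall>k. x $ k \<in> X k}"
      "{x\<in>S. \<not> P x} \<subseteq> {x :: real ^ 'd. \<forall>k. x $ k \<in> X k}" using Node.prems(2) by blast+
    have f1: "finite {x\<in>S. P x}" "finite {x\<in>S. \<not> P x}" using Node.prems(1) by simp_all
    have "interpretable_dtree {x\<in>S. P x} l" using Node.IH(1)[OF f1(1) s1(1) thr(1)] .
    moreover have "interpretable_dtree {x\<in>S. \<not> P x} r" using Node.IH(2)[OF f1(2) s1(2) thr(2)] .
    ultimately show ?case using sp by simp
  qed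
qed

end
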